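(* Let $\Gamma$ be a simplicial complex on $V_1=\{x_1,\ldots,x_n\}$ with $m$ facets. Let $G_1,\ldots,G_m\subseteq V_1$ be such that each $V_1\setminus G_j$ is a face of $\Gamma$ and every facet of $\Gamma$ is of the form $V_1\setminus G_j$ for some $j$. Let $y_1,\ldots,y_m$ be new vertices, let $\Delta_{V_1}$ be the $(n-1)$-simplex on $x_1,\ldots,x_n$, and define \[\Delta'=\left\{\sigma\cup\tau:\ \sigma\in\Gamma,\ \tau\subseteq\{y_j:\sigma\subseteq V_1\setminus G_j\}\right\},\qquad \Delta=\Delta'\cup\Delta_{V_1}.\] Then for all $i\geq0$, $\widetilde H_{i+1}(\Delta;\mathbb Z)\cong\widetilde H_i(\Gamma;\mathbb Z)$.
   Context: $\widetilde H_i(-;\mathbb Z)$ denotes reduced simplicial homology with integer coefficients. *)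

theory Defs
  imports "HOL-Algebra.Algebra"
begin

text \<open>The empty face is included, giving reduced (augmented) homology.
  Oriented simplices are oriented by the natural order of the vertices.\<close>

definition facets :: "nat set set \<Rightarrow> nat set set" where
  "facets K = {F \<in> K. \<forall>H\<in>K. F \<subseteq> H \<longrightarrow> H = F}"

text \<open>Integer chains supported on faces of cardinality d (i.e. dimension d-1).\<close>
definition chain_group :: "nat set set \<Rightarrow> nat \<Rightarrow> (nat set \<Rightarrow> int) monoid" where
  "chain_group K d = \<lparr> partial_object.carrier = {c. (\<forall>\<sigma>. c \<sigma> \<noteq> 0 \<longrightarrow> \<sigma> \<in> K \<and> card \<sigma> = d) \<and> finite {\<sigma>. c \<sigma> \<noteq> 0}},
                        monoid.mult = (\<lambda>a b \<sigma>. a \<sigma> + b \<sigma>), monoid.one = (\<lambda>\<sigma>. 0) \<rparr>"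

text \<open>Incidence number [sigma : tau]: if tau = sigma - {v}, it is (-1)^(position of v in sorted sigma).\<close>
definition incidence :: "nat set \<Rightarrow> nat set \<Rightarrow> int" where
  "incidence \<sigma> \<tau> =
     (if finite \<sigma> \<and> \<tau> \<subseteq> \<sigma> \<and> card (\<sigma> - \<tau>) = 1
      then (-1) ^ card {w \<in> \<sigma>. w < the_elem (\<sigma> - \<tau>)} else 0)"

definition boundary :: "(nat set \<Rightarrow> int) \<Rightarrow> (nat set \<Rightarrow> int)" where
  "boundary c = (\<lambda>\<tau>. \<Sum>\<sigma> \<in> {\<sigma>. c \<sigma> \<noteq> 0}. c \<sigma> * incidence \<sigma> \<tau>)"

definition cycles :: "nat set set \<Rightarrow> nat \<Rightarrow> (nat set \<Rightarrow> int) set" where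
  "cycles K d = {c \<in> carrier (chain_group K d). boundary c = (\<lambda>\<tau>. 0)}"

definition boundaries :: "nat set set \<Rightarrow> nat \<Rightarrow> (nat set \<Rightarrow> int) set" where
  "boundaries K d = boundary ` carrier (chain_group K (Suc d))"

text \<open>Reduced simplicial homology with integer coefficients in dimension i
  (faces of dimension i have cardinality i+1).\<close>
definition reduced_homology :: "nat set set \<Rightarrow> nat \<Rightarrow> (nat set \<Rightarrow> int) set monoid" where
  "reduced_homology K i =
     ((chain_group K (Suc i))\<lparr>carrier := cycles K (Suc i)\<rparr>) Mod boundaries K (Suc i)"

definition simplicial_complex_on :: "nat set \<Rightarrow> nat set set \<Rightarrow> bool" where
  "simplicial_complex_on V K \<longleftrightarrow> K \<noteq> {} \<and> K \<subseteq> Pow V \<and> (\<forall>\<sigma>\<in>K. \<forall>\<tau>. \<tau> \<subseteq> \<sigma> \<longrightarrow> \<tau> \<in> K)"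

end

theory Submission
  imports Defs
begin


definition fg :: "(nat set \<Rightarrow> int) set \<Rightarrow> (nat set \<Rightarrow> int) monoid" where
  "fg S = \<lparr>partial_object.carrier = S, monoid.mult = (\<lambda>a b \<sigma>. a \<sigma> + b \<sigma>), monoid.one = (\<lambda>\<sigma>. 0)\<rparr>"

definition addgrp :: "(nat set \<Rightarrow> int) set \<Rightarrow> bool" where
  "addgrp S \<longleftrightarrow> (\<lambda>\<sigma>. 0) \<in> S \<and> (\<forall>a\<in>S. \<forall>b\<in>S. (\<lambda>\<sigma>. a \<sigma> + b \<sigma>) \<in> S) \<and> (\<forall>a\<in>S. (\<lambda>\<sigma>. - a \<sigma>) \<in> S)"

lemma fg_simps[simp]: "carrier (fg S) = S" "monoid.mult (fg S) = (\<lambda>a b \<sigma>. a \<sigma> + b \<sigma>)" "monoid.one (fg S) = (\<lambda>\<sigma>. 0)"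
  by (simp_all add: fg_def)

lemma fg_comm_group: assumes "addgrp S" shows "comm_group (fg S)"
proof (rule comm_groupI)
  show "\<And>x. x \<in> carrier (fg S) \<Longrightarrow> \<exists>y\<in>carrier (fg S). y \<otimes>\<^bsub>fg S\<^esub> x = \<one>\<^bsub>fg S\<^esub>"
    using assms unfolding addgrp_def by (intro bexI[of _ "\<lambda>\<sigma>. - _ \<sigma>"]) auto
qed (use assms in \<open>auto simp: addgrp_def add.assoc add.commute\<close>)

lemma fg_inv: assumes "addgrp S" "a \<in> S" shows "inv\<^bsub>fg S\<^esub> a = (\<lambda>\<sigma>. - a \<sigma>)"
proof -
  interpret comm_group "fg S" by (rule fg_comm_group[OF assms(1)])
  show ?thesis using assms by (intro inv_equality) (auto simp: addgrp_def)
qed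

lemma fg_subgroup: assumes "addgrp S" "addgrp T" "T \<subseteq> S" shows "subgroup T (fg S)"
proof -
  interpret comm_group "fg S" by (rule fg_comm_group[OF assms(1)])
  show ?thesis
  proof (rule subgroupI)
    fix a assume "a \<in> T" then show "inv\<^bsub>fg S\<^esub> a \<in> T" using assms fg_inv[OF assms(1)] by (auto simp: addgrp_def)
  qed (use assms in \<open>auto simp: addgrp_def\<close>)
qed

lemma quot_iso:
  assumes Z1: "addgrp Z1" and B1: "addgrp B1" "B1 \<subseteq> Z1"
    and Z2: "addgrp Z2" and B2: "addgrp B2" "B2 \<subseteq> Z2"
    and fZ: "\<And>z. z \<in> Z1 \<Longrightarrow> f z \<in> Z2"
    and fadd: "\<And>a b. a \<in> Z1 \<Longrightarrow> b \<in> Z1 \<Longrightarrow> f (\<lambda>\<sigma>. a \<sigma> + b \<sigma>) = (\<lambda>\<sigma>. f a \<sigma> + f b \<sigma>)"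
    and ker: "\<And>z. z \<in> Z1 \<Longrightarrow> f z \<in> B2 \<longleftrightarrow> z \<in> B1"
    and sur: "\<And>c. c \<in> Z2 \<Longrightarrow> \<exists>z\<in>Z1. \<exists>b\<in>B2. f z = (\<lambda>\<sigma>. b \<sigma> + c \<sigma>)"
  shows "fg Z1 Mod B1 \<cong> fg Z2 Mod B2"
proof -
  interpret H1: comm_group "fg Z1" by (rule fg_comm_group[OF Z1])
  interpret H2: comm_group "fg Z2" by (rule fg_comm_group[OF Z2])
  have sg2: "subgroup B2 (fg Z2)" by (rule fg_subgroup[OF Z2 B2])
  interpret N2: normal B2 "fg Z2" by (rule H2.subgroup_imp_normal[OF sg2])
  define h where "h = (\<lambda>a. B2 #>\<^bsub>fg Z2\<^esub> a) \<circ> f"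
  have fhom: "f \<in> hom (fg Z1) (fg Z2)" using fZ fadd by (auto simp: hom_def)
  have hhom: "h \<in> hom (fg Z1) (fg Z2 Mod B2)"
    unfolding h_def by (rule hom_compose[OF fhom N2.r_coset_hom_Mod])
  interpret gh: group_hom "fg Z1" "fg Z2 Mod B2" h
    using hhom N2.factorgroup_is_group by (intro group_hom.intro group_hom_axioms.intro) auto
  have im: "h ` carrier (fg Z1) = carrier (fg Z2 Mod B2)"
  proof
    show "h ` carrier (fg Z1) \<subseteq> carrier (fg Z2 Mod B2)" using hhom by (auto simp: hom_def)
    show "carrier (fg Z2 Mod B2) \<subseteq> h ` carrier (fg Z1)"
    proof
      fix XX assume "XX \<in> carrier (fg Z2 Mod B2)"
      then obtain c where c: "c \<in> Z2" "XX = B2 #>\<^bsub>fg Z2\<^esub> c"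
        by (auto simp: FactGroup_def RCOSETS_def)
      obtain z b where zb: "z \<in> Z1" "b \<in> B2" "f z = (\<lambda>\<sigma>. b \<sigma> + c \<sigma>)" using sur[OF c(1)] by blast
      have "f z \<in> B2 #>\<^bsub>fg Z2\<^esub> c" using zb by (auto simp: r_coset_def)
      then have "B2 #>\<^bsub>fg Z2\<^esub> c = B2 #>\<^bsub>fg Z2\<^esub> f z"
        using H2.repr_independence[OF _ _ sg2] c by auto
      then show "XX \<in> h ` carrier (fg Z1)" using c zb unfolding h_def by (intro image_eqI[of _ _ z]) auto
    qed
  qed
  have kerB: "kernel (fg Z1) (fg Z2 Mod B2) h = B1"
  proof -
    have "\<And>z. z \<in> Z1 \<Longrightarrow> h z = B2 \<longleftrightarrow> z \<in> B1"
    proof -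
      fix z assume z: "z \<in> Z1"
      have "h z = B2 \<longleftrightarrow> f z \<in> B2"
        using H2.coset_join1[OF _ _ sg2] H2.coset_join2[OF _ sg2] fZ[OF z] by (auto simp: h_def)
      then show "h z = B2 \<longleftrightarrow> z \<in> B1" using ker[OF z] by simp
    qed
    then show ?thesis using B1 by (auto simp: kernel_def FactGroup_def)
  qed
  show ?thesis using gh.FactGroup_iso[OF im] kerB by simp
qed




definition fchain :: "(nat set \<Rightarrow> int) \<Rightarrow> bool" where
  "fchain c \<longleftrightarrow> finite {\<sigma>. c \<sigma> \<noteq> 0} \<and> (\<forall>\<sigma>. c \<sigma> \<noteq> 0 \<longrightarrow> finite \<sigma>)"

definition pcount :: "nat \<Rightarrow> nat set \<Rightarrow> nat" where
  "pcount u \<rho> = card {w\<in>\<rho>. w < u}"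

lemma inc_nz:
  assumes "incidence \<sigma> \<tau> \<noteq> 0"
  shows "finite \<sigma> \<and> (\<exists>u. u \<notin> \<tau> \<and> \<sigma> = insert u \<tau>)"
proof -
  have h: "finite \<sigma> \<and> \<tau> \<subseteq> \<sigma> \<and> card (\<sigma> - \<tau>) = 1"
  proof (rule ccontr)
    assume "\<not> (finite \<sigma> \<and> \<tau> \<subseteq> \<sigma> \<and> card (\<sigma> - \<tau>) = 1)"
    then have "incidence \<sigma> \<tau> = 0" unfolding incidence_def by (simp only: if_False)
    then show False using assms by simp
  qed
  then obtain u where "\<sigma> - \<tau> = {u}" by (meson card_1_singletonE)
  then show ?thesis using h by blast
qed

lemma inc_insert:
  assumes "finite \<tau>" "u \<notin> \<tau>"
  shows "incidence (insert u \<tau>) \<tau> = (-1) ^ pcount u \<tau>"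
proof -
  have "insert u \<tau> - \<tau> = {u}" using assms by auto
  moreover have "{w \<in> insert u \<tau>. w < u} = {w\<in>\<tau>. w < u}" by auto
  ultimately show ?thesis using assms by (simp add: incidence_def pcount_def subset_insertI)
qed

lemma pcount_insert:
  assumes "finite \<rho>" "u \<notin> \<rho>" "u \<noteq> v"
  shows "pcount v (insert u \<rho>) = pcount v \<rho> + (if u < v then 1 else 0)"
proof -
  have "{w \<in> insert u \<rho>. w < v} = (if u < v then insert u {w\<in>\<rho>. w < v} else {w\<in>\<rho>. w < v})" by auto
  then show ?thesis using assms by (simp add: pcount_def)
qed

lemma bd_nz: "boundary c \<tau> \<noteq> 0 \<Longrightarrow> \<exists>\<sigma>. c \<sigma> \<noteq> 0 \<and> incidence \<sigma> \<tau> \<noteq> 0"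
  unfolding boundary_def by (metis (no_types, lifting) mult_not_zero sum.neutral)

lemma bd_nz2: "boundary c \<tau> \<noteq> 0 \<Longrightarrow> \<exists>\<sigma> u. c \<sigma> \<noteq> 0 \<and> finite \<sigma> \<and> u \<notin> \<tau> \<and> \<sigma> = insert u \<tau>"
  using bd_nz inc_nz by metis

lemma bd_infinite: "\<not> finite \<rho> \<Longrightarrow> boundary c \<rho> = 0"
  using bd_nz2 by fastforce

lemma boundary_sum:
  assumes "finite S" "{\<sigma>. c \<sigma> \<noteq> 0} \<subseteq> S"
  shows "boundary c \<tau> = (\<Sum>\<sigma>\<in>S. c \<sigma> * incidence \<sigma> \<tau>)"
  unfolding boundary_def using assms by (intro sum.mono_neutral_left) auto

lemma boundary_add:
  assumes "finite {\<sigma>. a \<sigma> \<noteq> 0}" "finite {\<sigma>. b \<sigma> \<noteq> 0}"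
  shows "boundary (\<lambda>\<sigma>. a \<sigma> + b \<sigma>) \<tau> = boundary a \<tau> + boundary b \<tau>"
proof -
  let ?S = "{\<sigma>. a \<sigma> \<noteq> 0} \<union> {\<sigma>. b \<sigma> \<noteq> 0}"
  have "boundary (\<lambda>\<sigma>. a \<sigma> + b \<sigma>) \<tau> = (\<Sum>\<sigma>\<in>?S. (a \<sigma> + b \<sigma>) * incidence \<sigma> \<tau>)"
    apply (rule boundary_sum) apply (simp add: assms) by auto
  also have "\<dots> = (\<Sum>\<sigma>\<in>?S. a \<sigma> * incidence \<sigma> \<tau>) + (\<Sum>\<sigma>\<in>?S. b \<sigma> * incidence \<sigma> \<tau>)"
    by (simp only: distrib_right sum.distrib)
  also have "\<dots> = boundary a \<tau> + boundary b \<tau>"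
  proof -
    have "boundary a \<tau> = (\<Sum>\<sigma>\<in>?S. a \<sigma> * incidence \<sigma> \<tau>)" apply (rule boundary_sum) apply (simp add: assms) by auto
    moreover have "boundary b \<tau> = (\<Sum>\<sigma>\<in>?S. b \<sigma> * incidence \<sigma> \<tau>)" apply (rule boundary_sum) apply (simp add: assms) by auto
    ultimately show ?thesis by simp
  qed
  finally show ?thesis .
qed

lemma boundary_neg:
  "boundary (\<lambda>\<sigma>. - a \<sigma>) \<tau> = - boundary a \<tau>"
  unfolding boundary_def by (simp add: sum_negf)

lemma boundary_diff:
  assumes "finite {\<sigma>. a \<sigma> \<noteq> 0}" "finite {\<sigma>. b \<sigma> \<noteq> 0}"
  shows "boundary (\<lambda>\<sigma>. a \<sigma> - b \<sigma>) \<tau> = boundary a \<tau> - boundary b \<tau>"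
proof -
  have "finite {\<sigma>. - b \<sigma> \<noteq> 0}" using assms by simp
  then show ?thesis using boundary_add[OF assms(1), of "\<lambda>\<sigma>. - b \<sigma>"] boundary_neg[of b] by simp
qed

lemma boundary_zero: "boundary (\<lambda>\<sigma>. 0) = (\<lambda>\<tau>. 0)"
  unfolding boundary_def by simp

lemma coface:
  assumes fin: "finite {\<sigma>. c \<sigma> \<noteq> 0}" and "finite \<tau>" "finite U" and sub: "\<And>\<sigma>. c \<sigma> \<noteq> 0 \<Longrightarrow> \<sigma> \<subseteq> U"
  shows "boundary c \<tau> = (\<Sum>u\<in>U-\<tau>. c (insert u \<tau>) * incidence (insert u \<tau>) \<tau>)"
proof -
  let ?g = "\<lambda>\<sigma>. c \<sigma> * incidence \<sigma> \<tau>"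
  let ?I = "(\<lambda>u. insert u \<tau>) ` (U - \<tau>)"
  have "boundary c \<tau> = sum ?g ({\<sigma>. c \<sigma> \<noteq> 0} \<union> ?I)"
    using assms by (intro boundary_sum) auto
  also have "\<dots> = sum ?g ?I"
  proof (rule sum.mono_neutral_right)
    show "\<forall>\<sigma>\<in>{\<sigma>. c \<sigma> \<noteq> 0} \<union> ?I - ?I. ?g \<sigma> = 0"
    proof
      fix \<sigma> assume s: "\<sigma> \<in> {\<sigma>. c \<sigma> \<noteq> 0} \<union> ?I - ?I"
      show "?g \<sigma> = 0"
      proof (rule ccontr)
        assume "?g \<sigma> \<noteq> 0"
        then have "incidence \<sigma> \<tau> \<noteq> 0" "c \<sigma> \<noteq> 0" by auto
        then obtain u where "u \<notin> \<tau>" "\<sigma> = insert u \<tau>" using inc_nz by blast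
        then show False using s sub[OF \<open>c \<sigma> \<noteq> 0\<close>] by auto
      qed
    qed
  qed (use assms in auto)
  also have "\<dots> = (\<Sum>u\<in>U-\<tau>. ?g (insert u \<tau>))"
    by (subst sum.reindex) (auto simp: inj_on_def)
  finally show ?thesis .
qed

lemma antisym_sum:
  fixes f :: "nat \<Rightarrow> nat \<Rightarrow> int"
  assumes "finite W" "\<And>u v. u \<in> W \<Longrightarrow> v \<in> W \<Longrightarrow> u \<noteq> v \<Longrightarrow> f u v = - f v u"
  shows "(\<Sum>u\<in>W. \<Sum>v\<in>W-{u}. f u v) = 0"
proof -
  define g where "g u v = (if u = v then 0 else f u v)" for u v
  have 1: "(\<Sum>v\<in>W-{u}. f u v) = (\<Sum>v\<in>W. g u v)" if "u \<in> W" for u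
  proof -
    have "(\<Sum>v\<in>W. g u v) = g u u + (\<Sum>v\<in>W-{u}. g u v)" using assms(1) that by (rule sum.remove)
    also have "(\<Sum>v\<in>W-{u}. g u v) = (\<Sum>v\<in>W-{u}. f u v)" by (rule sum.cong) (auto simp: g_def)
    then have "g u u + (\<Sum>v\<in>W-{u}. g u v) = (\<Sum>v\<in>W-{u}. f u v)" by (simp add: g_def)
    finally show ?thesis by simp
  qed
  have S: "(\<Sum>u\<in>W. \<Sum>v\<in>W-{u}. f u v) = (\<Sum>u\<in>W. \<Sum>v\<in>W. g u v)" by (rule sum.cong[OF refl], rule 1)
  have "(\<Sum>u\<in>W. \<Sum>v\<in>W. g u v) = (\<Sum>v\<in>W. \<Sum>u\<in>W. g u v)" by (rule sum.swap)
  also have "\<dots> = (\<Sum>v\<in>W. \<Sum>u\<in>W. - g v u)"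
  proof (intro sum.cong refl)
    fix u v assume "u \<in> W" "v \<in> W"
    then show "g u v = - g v u" unfolding g_def using assms(2)[of u v] by auto
  qed
  also have "\<dots> = - (\<Sum>v\<in>W. \<Sum>u\<in>W. g v u)" by (simp add: sum_negf)
  finally have T: "(\<Sum>u\<in>W. \<Sum>v\<in>W. g u v) = - (\<Sum>u\<in>W. \<Sum>v\<in>W. g u v)" .
  show ?thesis using S T by linarith
qed




lemma sign1:
  assumes "finite \<rho>" "u \<notin> \<rho>" "v \<notin> \<rho>" "u \<noteq> v"
  shows "incidence (insert v (insert u \<rho>)) (insert u \<rho>) * incidence (insert u \<rho>) \<rho> =
         - (incidence (insert u (insert v \<rho>)) (insert v \<rho>) * incidence (insert v \<rho>) \<rho>)"
proof -
  have a: "incidence (insert v (insert u \<rho>)) (insert u \<rho>) = (-1) ^ (pcount v \<rho> + (if u < v then 1 else 0))"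
    using assms by (simp add: inc_insert pcount_insert)
  have b: "incidence (insert u (insert v \<rho>)) (insert v \<rho>) = (-1) ^ (pcount u \<rho> + (if v < u then 1 else 0))"
    using assms by (simp add: inc_insert pcount_insert)
  show ?thesis using assms unfolding a b
    by (cases "u < v") (auto simp: inc_insert power_add)
qed

lemma sign2:
  assumes "finite \<rho>" "u \<notin> \<rho>" "y \<notin> \<rho>" "u \<noteq> y"
  shows "incidence (insert u (insert y \<rho>)) (insert u \<rho>) * incidence (insert u (insert y \<rho>)) (insert y \<rho>)
     + incidence (insert y \<rho>) \<rho> * incidence (insert u \<rho>) \<rho> = 0"
proof -
  have e: "insert u (insert y \<rho>) = insert y (insert u \<rho>)" by auto
  have a: "incidence (insert u (insert y \<rho>)) (insert u \<rho>) = (-1) ^ (pcount y \<rho> + (if u < y then 1 else 0))"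
    using assms unfolding e by (simp add: inc_insert pcount_insert)
  have b: "incidence (insert u (insert y \<rho>)) (insert y \<rho>) = (-1) ^ (pcount u \<rho> + (if y < u then 1 else 0))"
    using assms by (simp add: inc_insert pcount_insert)
  show ?thesis using assms unfolding a b
    by (cases "u < y") (auto simp: inc_insert power_add)
qed

lemma inc_sq: "finite \<rho> \<Longrightarrow> u \<notin> \<rho> \<Longrightarrow> incidence (insert u \<rho>) \<rho> * incidence (insert u \<rho>) \<rho> = 1"
  by (simp add: inc_insert power_mult_distrib[symmetric])

lemma fchain_Vfin: "fchain c \<Longrightarrow> finite (\<Union>{\<sigma>. c \<sigma> \<noteq> 0})"
  unfolding fchain_def by auto

lemma bd_sub: "boundary c \<tau> \<noteq> 0 \<Longrightarrow> \<exists>\<sigma>. c \<sigma> \<noteq> 0 \<and> \<tau> \<subseteq> \<sigma> \<and> finite \<sigma> \<and> card \<sigma> = Suc (card \<tau>)"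
proof -
  assume "boundary c \<tau> \<noteq> 0"
  then obtain \<sigma> u where s: "c \<sigma> \<noteq> 0" "finite \<sigma>" "u \<notin> \<tau>" "\<sigma> = insert u \<tau>" using bd_nz2 by blast
  then have "finite \<tau>" by auto
  then show ?thesis using s by (intro exI[of _ \<sigma>]) auto
qed

lemma fchain_bd: assumes "fchain c" shows "fchain (boundary c)"
proof -
  let ?V = "\<Union>{\<sigma>. c \<sigma> \<noteq> 0}"
  have "{\<tau>. boundary c \<tau> \<noteq> 0} \<subseteq> Pow ?V" using bd_sub by fastforce
  moreover have "finite (Pow ?V)" using fchain_Vfin[OF assms] by simp
  ultimately show ?thesis unfolding fchain_def using bd_sub by (metis finite_subset)
qed

lemma dd: assumes "fchain c" shows "boundary (boundary c) \<rho> = 0"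
proof (cases "finite \<rho>")
  case False then show ?thesis by (rule bd_infinite)
next
  case True
  let ?V = "\<Union>{\<sigma>. c \<sigma> \<noteq> 0}"
  have finV: "finite ?V" using fchain_Vfin[OF assms] .
  have fc: "finite {\<sigma>. c \<sigma> \<noteq> 0}" using assms by (simp add: fchain_def)
  have fbc: "finite {\<sigma>. boundary c \<sigma> \<noteq> 0}" using fchain_bd[OF assms] by (simp add: fchain_def)
  have subc: "\<And>\<sigma>. c \<sigma> \<noteq> 0 \<Longrightarrow> \<sigma> \<subseteq> ?V" by auto
  have subbc: "\<And>\<sigma>. boundary c \<sigma> \<noteq> 0 \<Longrightarrow> \<sigma> \<subseteq> ?V" using bd_sub by blast
  define W where "W = ?V - \<rho>"
  define f where "f u v = c (insert v (insert u \<rho>)) * incidence (insert v (insert u \<rho>)) (insert u \<rho>) * incidence (insert u \<rho>) \<rho>" for u v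
  have "boundary (boundary c) \<rho> = (\<Sum>u\<in>W. boundary c (insert u \<rho>) * incidence (insert u \<rho>) \<rho>)"
    unfolding W_def by (rule coface[OF fbc True finV subbc])
  also have "\<dots> = (\<Sum>u\<in>W. \<Sum>v\<in>W-{u}. f u v)"
  proof (rule sum.cong[OF refl])
    fix u assume u: "u \<in> W"
    have "boundary c (insert u \<rho>) = (\<Sum>v\<in>?V - insert u \<rho>. c (insert v (insert u \<rho>)) * incidence (insert v (insert u \<rho>)) (insert u \<rho>))"
      by (rule coface[OF fc _ finV subc]) (use True in simp)
    moreover have "?V - insert u \<rho> = W - {u}" unfolding W_def by auto
    ultimately show "boundary c (insert u \<rho>) * incidence (insert u \<rho>) \<rho> = (\<Sum>v\<in>W-{u}. f u v)"
      by (simp add: f_def sum_distrib_right)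
  qed
  also have "\<dots> = 0"
  proof (rule antisym_sum)
    show "finite W" unfolding W_def using finV by simp
    fix u v assume "u \<in> W" "v \<in> W" "u \<noteq> v"
    then have uv: "u \<notin> \<rho>" "v \<notin> \<rho>" unfolding W_def by auto
    have e: "insert u (insert v \<rho>) = insert v (insert u \<rho>)" by auto
    have s: "incidence (insert v (insert u \<rho>)) (insert u \<rho>) * incidence (insert u \<rho>) \<rho> =
         - (incidence (insert v (insert u \<rho>)) (insert v \<rho>) * incidence (insert v \<rho>) \<rho>)"
      using sign1[OF True uv \<open>u \<noteq> v\<close>] e by simp
    have "c (insert v (insert u \<rho>)) * (incidence (insert v (insert u \<rho>)) (insert u \<rho>) * incidence (insert u \<rho>) \<rho>) =
         c (insert v (insert u \<rho>)) * (- (incidence (insert v (insert u \<rho>)) (insert v \<rho>) * incidence (insert v \<rho>) \<rho>))"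
      using s by simp
    then show "f u v = - f v u" unfolding f_def e by (simp add: algebra_simps)
  qed
  finally show ?thesis .
qed




definition cone :: "nat \<Rightarrow> (nat set \<Rightarrow> int) \<Rightarrow> (nat set \<Rightarrow> int)" where
  "cone y c = (\<lambda>\<rho>. if y \<in> \<rho> then incidence \<rho> (\<rho> - {y}) * c (\<rho> - {y}) else 0)"

lemma cone_nz: "cone y c \<rho> \<noteq> 0 \<Longrightarrow> y \<in> \<rho> \<and> c (\<rho> - {y}) \<noteq> 0"
  unfolding cone_def by (auto split: if_splits)

lemma fchain_cone: assumes "fchain c" shows "fchain (cone y c)"
proof -
  have 1: "\<rho> \<in> insert y ` {\<sigma>. c \<sigma> \<noteq> 0} \<and> finite \<rho>" if "cone y c \<rho> \<noteq> 0" for \<rho>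
  proof -
    have h: "y \<in> \<rho>" "c (\<rho> - {y}) \<noteq> 0" using cone_nz[OF that] by auto
    have e: "\<rho> = insert y (\<rho> - {y})" using h by auto
    have "finite (\<rho> - {y})" using h assms unfolding fchain_def by blast
    then have "finite (insert y (\<rho> - {y}))" by (rule finite.insertI)
    moreover have "\<rho> \<in> insert y ` {\<sigma>. c \<sigma> \<noteq> 0}"
      using h(2) e by (intro image_eqI[of _ _ "\<rho> - {y}"]) auto
    ultimately show ?thesis using e by simp
  qed
  have "finite {\<sigma>. c \<sigma> \<noteq> 0}" using assms unfolding fchain_def by blast
  then have f: "finite (insert y ` {\<sigma>. c \<sigma> \<noteq> 0})" by (rule finite_imageI)
  have sub: "{\<rho>. cone y c \<rho> \<noteq> 0} \<subseteq> insert y ` {\<sigma>. c \<sigma> \<noteq> 0}" using 1 by blast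
  have "finite {\<rho>. cone y c \<rho> \<noteq> 0}" by (rule finite_subset[OF sub f])
  then show ?thesis unfolding fchain_def using 1 by blast
qed

lemma sum_comb:
  fixes a b c d :: "nat \<Rightarrow> int" and K :: int
  shows "(\<Sum>u\<in>S. a u * c u * b u) + K * (\<Sum>u\<in>S. c u * d u) = (\<Sum>u\<in>S. c u * (a u * b u + K * d u))"
proof -
  have "K * (\<Sum>u\<in>S. c u * d u) = (\<Sum>u\<in>S. K * (c u * d u))" by (rule sum_distrib_left)
  moreover have "(\<Sum>u\<in>S. a u * c u * b u) + (\<Sum>u\<in>S. K * (c u * d u)) = (\<Sum>u\<in>S. a u * c u * b u + K * (c u * d u))" by (rule sum.distrib[symmetric])
  moreover have "(\<Sum>u\<in>S. a u * c u * b u + K * (c u * d u)) = (\<Sum>u\<in>S. c u * (a u * b u + K * d u))"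
    by (rule sum.cong) (simp_all add: algebra_simps)
  ultimately show ?thesis by simp
qed

lemma cone_id: assumes "fchain c" shows "boundary (cone y c) \<rho> + cone y (boundary c) \<rho> = c \<rho>"
proof -
  let ?V = "\<Union>{\<sigma>. c \<sigma> \<noteq> 0}"
  define U where "U = insert y ?V"
  have finU: "finite U" unfolding U_def using fchain_Vfin[OF assms] by simp
  have fc: "finite {\<sigma>. c \<sigma> \<noteq> 0}" using assms by (simp add: fchain_def)
  have fcc: "finite {\<sigma>. cone y c \<sigma> \<noteq> 0}" using fchain_cone[OF assms] by (simp add: fchain_def)
  have subc: "\<And>\<sigma>. c \<sigma> \<noteq> 0 \<Longrightarrow> \<sigma> \<subseteq> U" unfolding U_def by auto
  have subcc: "\<And>\<sigma>. cone y c \<sigma> \<noteq> 0 \<Longrightarrow> \<sigma> \<subseteq> U" unfolding U_def using cone_nz by blast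
  show ?thesis
  proof (cases "finite \<rho>")
    case False
    have "c \<rho> = 0" using assms False unfolding fchain_def by auto
    moreover have "cone y (boundary c) \<rho> = 0" unfolding cone_def using False bd_infinite by simp
    ultimately show ?thesis using bd_infinite[OF False] by simp
  next
    case fin: True
    show ?thesis
    proof (cases "y \<in> \<rho>")
      case False
      have yU: "y \<in> U - \<rho>" unfolding U_def using False by simp
      have "boundary (cone y c) \<rho> = (\<Sum>u\<in>U-\<rho>. cone y c (insert u \<rho>) * incidence (insert u \<rho>) \<rho>)"
        by (rule coface[OF fcc fin finU subcc])
      also have "\<dots> = cone y c (insert y \<rho>) * incidence (insert y \<rho>) \<rho> + (\<Sum>u\<in>U-\<rho>-{y}. cone y c (insert u \<rho>) * incidence (insert u \<rho>) \<rho>)"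
        using finU yU by (simp add: sum.remove)
      also have "(\<Sum>u\<in>U-\<rho>-{y}. cone y c (insert u \<rho>) * incidence (insert u \<rho>) \<rho>) = 0"
        using False by (intro sum.neutral) (auto simp: cone_def)
      also have "cone y c (insert y \<rho>) * incidence (insert y \<rho>) \<rho> = c \<rho>"
      proof -
        have "insert y \<rho> - {y} = \<rho>" using False by auto
        then have "cone y c (insert y \<rho>) = incidence (insert y \<rho>) \<rho> * c \<rho>" unfolding cone_def by simp
        then show ?thesis using inc_sq[OF fin False] by (simp add: algebra_simps)
      qed
      finally show ?thesis using False by (simp add: cone_def)
    next
      case True
      define r where "r = \<rho> - {y}"
      have r: "\<rho> = insert y r" "y \<notin> r" "finite r" unfolding r_def using True fin by auto
      have "boundary (cone y c) \<rho> = (\<Sum>u\<in>U-\<rho>. cone y c (insert u \<rho>) * incidence (insert u \<rho>) \<rho>)"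
        by (rule coface[OF fcc fin finU subcc])
      also have "\<dots> = (\<Sum>u\<in>U-\<rho>. incidence (insert u (insert y r)) (insert u r) * c (insert u r) * incidence (insert u (insert y r)) (insert y r))"
      proof (rule sum.cong[OF refl])
        fix u assume "u \<in> U - \<rho>"
        then have "u \<notin> \<rho>" by simp
        then have "insert u \<rho> - {y} = insert u r" "y \<in> insert u \<rho>" using r by auto
        then show "cone y c (insert u \<rho>) * incidence (insert u \<rho>) \<rho> = incidence (insert u (insert y r)) (insert u r) * c (insert u r) * incidence (insert u (insert y r)) (insert y r)"
          unfolding cone_def using r by simp
      qed
      finally have A: "boundary (cone y c) \<rho> = \<dots>" .
      have "boundary c r = (\<Sum>u\<in>U-r. c (insert u r) * incidence (insert u r) r)"
        by (rule coface[OF fc r(3) finU subc])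
      also have "U - r = insert y (U - \<rho>)" unfolding U_def using r by auto
      also have "(\<Sum>u\<in>insert y (U - \<rho>). c (insert u r) * incidence (insert u r) r)
           = c \<rho> * incidence \<rho> r + (\<Sum>u\<in>U - \<rho>. c (insert u r) * incidence (insert u r) r)"
        using finU r by (simp add: sum.insert)
      finally have B: "cone y (boundary c) \<rho> = incidence \<rho> r * (c \<rho> * incidence \<rho> r + (\<Sum>u\<in>U - \<rho>. c (insert u r) * incidence (insert u r) r))"
        unfolding cone_def using True r_def by simp
      have sq: "incidence \<rho> r * (c \<rho> * incidence \<rho> r) = c \<rho>"
        using inc_sq[OF r(3) r(2)] r(1) by (simp add: algebra_simps)
      have Z: "(\<Sum>u\<in>U-\<rho>. incidence (insert u (insert y r)) (insert u r) * c (insert u r) * incidence (insert u (insert y r)) (insert y r))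
          + incidence \<rho> r * (\<Sum>u\<in>U - \<rho>. c (insert u r) * incidence (insert u r) r) = 0"
      proof -
        have "(\<Sum>u\<in>U-\<rho>. incidence (insert u (insert y r)) (insert u r) * c (insert u r) * incidence (insert u (insert y r)) (insert y r))
          + incidence \<rho> r * (\<Sum>u\<in>U - \<rho>. c (insert u r) * incidence (insert u r) r)
          = (\<Sum>u\<in>U-\<rho>. c (insert u r) * (incidence (insert u (insert y r)) (insert u r) * incidence (insert u (insert y r)) (insert y r)
              + incidence (insert y r) r * incidence (insert u r) r))"
          using sum_comb[of "\<lambda>u. incidence (insert u (insert y r)) (insert u r)" "\<lambda>u. c (insert u r)"
            "\<lambda>u. incidence (insert u (insert y r)) (insert y r)" "U - \<rho>" "incidence \<rho> r" "\<lambda>u. incidence (insert u r) r"]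
          unfolding r(1)[symmetric] .
        also have "\<dots> = 0"
        proof (rule sum.neutral, rule ballI)
          fix u assume "u \<in> U - \<rho>"
          then have "u \<notin> r" "u \<noteq> y" using r by auto
          then show "c (insert u r) * (incidence (insert u (insert y r)) (insert u r) * incidence (insert u (insert y r)) (insert y r)
              + incidence (insert y r) r * incidence (insert u r) r) = 0"
            using sign2[OF r(3) _ r(2)] by simp
        qed
        finally show ?thesis .
      qed
      show ?thesis unfolding A B using sq Z by (simp add: algebra_simps)
    qed
  qed
qed




lemma chains_iff: "c \<in> carrier (chain_group K d) \<longleftrightarrow> (\<forall>\<sigma>. c \<sigma> \<noteq> 0 \<longrightarrow> \<sigma> \<in> K \<and> card \<sigma> = d) \<and> finite {\<sigma>. c \<sigma> \<noteq> 0}"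
  by (simp add: chain_group_def)

definition acyc :: "nat set set \<Rightarrow> nat \<Rightarrow> bool" where
  "acyc K k \<longleftrightarrow> (\<forall>z \<in> carrier (chain_group K k). boundary z = (\<lambda>\<tau>. 0) \<longrightarrow> (\<exists>a \<in> carrier (chain_group K (Suc k)). boundary a = z))"

lemma fchain_of: "c \<in> carrier (chain_group K d) \<Longrightarrow> \<forall>\<sigma>\<in>K. finite \<sigma> \<Longrightarrow> fchain c"
  unfolding chains_iff fchain_def by blast

lemma acyc_empty: "acyc {} k"
proof -
  have "\<And>z. z \<in> carrier (chain_group {} k) \<Longrightarrow> z = (\<lambda>\<sigma>. 0)" unfolding chains_iff by auto
  moreover have "(\<lambda>\<sigma>. 0) \<in> carrier (chain_group {} (Suc k))" unfolding chains_iff by simp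
  ultimately show ?thesis unfolding acyc_def using boundary_zero by metis
qed

lemma fchain_add: "fchain a \<Longrightarrow> fchain b \<Longrightarrow> fchain (\<lambda>\<sigma>. a \<sigma> + b \<sigma>)"
proof -
  assume a: "fchain a" and b: "fchain b"
  have "{\<sigma>. a \<sigma> + b \<sigma> \<noteq> 0} \<subseteq> {\<sigma>. a \<sigma> \<noteq> 0} \<union> {\<sigma>. b \<sigma> \<noteq> 0}" by auto
  moreover have "finite ({\<sigma>. a \<sigma> \<noteq> 0} \<union> {\<sigma>. b \<sigma> \<noteq> 0})" using a b unfolding fchain_def by simp
  ultimately have "finite {\<sigma>. a \<sigma> + b \<sigma> \<noteq> 0}" by (rule finite_subset)
  moreover have "\<forall>\<sigma>. a \<sigma> + b \<sigma> \<noteq> 0 \<longrightarrow> finite \<sigma>" using a b unfolding fchain_def by (metis add.right_neutral add_0)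
  ultimately show ?thesis unfolding fchain_def by blast
qed

lemma fchain_neg: "fchain a \<Longrightarrow> fchain (\<lambda>\<sigma>. - a \<sigma>)"
  unfolding fchain_def by simp

lemma fchain_diff: "fchain a \<Longrightarrow> fchain b \<Longrightarrow> fchain (\<lambda>\<sigma>. a \<sigma> - b \<sigma>)"
  using fchain_add[of a "\<lambda>\<sigma>. - b \<sigma>"] fchain_neg[of b] by simp

lemma fchain_restr: "fchain a \<Longrightarrow> fchain (\<lambda>\<sigma>. if P \<sigma> then a \<sigma> else 0)"
proof -
  assume a: "fchain a"
  have "{\<sigma>. (if P \<sigma> then a \<sigma> else 0) \<noteq> 0} \<subseteq> {\<sigma>. a \<sigma> \<noteq> 0}" by auto
  moreover have "finite {\<sigma>. a \<sigma> \<noteq> 0}" using a unfolding fchain_def by simp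
  ultimately have "finite {\<sigma>. (if P \<sigma> then a \<sigma> else 0) \<noteq> 0}" by (rule finite_subset)
  then show ?thesis using a unfolding fchain_def by (simp split: if_splits)
qed

lemma fchain_finite: "fchain a \<Longrightarrow> finite {\<sigma>. a \<sigma> \<noteq> 0}"
  unfolding fchain_def by simp

lemma collapse:
  assumes K0K: "K0 \<subseteq> K" and finK: "\<forall>\<sigma>\<in>K. finite \<sigma>"
    and dc0: "\<And>\<rho> \<rho>'. \<rho> \<in> K0 \<Longrightarrow> \<rho>' \<subseteq> \<rho> \<Longrightarrow> \<rho>' \<in> K0"
    and i: "\<And>\<rho>. \<rho> \<in> K \<Longrightarrow> \<rho> \<notin> K0 \<Longrightarrow> insert y \<rho> \<in> K"
    and ii: "\<And>\<rho> s. \<rho> \<in> K0 \<Longrightarrow> s \<in> K \<Longrightarrow> s \<notin> K0 \<Longrightarrow> \<rho> \<subseteq> s \<Longrightarrow> insert y \<rho> \<in> K0"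
    and ac0: "acyc K0 k"
  shows "acyc K k"
  unfolding acyc_def
proof (intro ballI impI)
  fix z assume z: "z \<in> carrier (chain_group K k)" and bz: "boundary z = (\<lambda>\<tau>. 0)"
  have zK: "\<And>\<sigma>. z \<sigma> \<noteq> 0 \<Longrightarrow> \<sigma> \<in> K \<and> card \<sigma> = k" using z unfolding chains_iff by blast
  have fz: "fchain z" using fchain_of[OF z finK] .
  define z0 where "z0 = (\<lambda>\<rho>. if \<rho> \<in> K0 then z \<rho> else 0)"
  define z1 where "z1 = (\<lambda>\<rho>. if \<rho> \<notin> K0 then z \<rho> else 0)"
  have fz0: "fchain z0" unfolding z0_def by (rule fchain_restr[OF fz])
  have fz1: "fchain z1" unfolding z1_def by (rule fchain_restr[OF fz])
  have ez: "z = (\<lambda>\<rho>. z0 \<rho> + z1 \<rho>)" unfolding z0_def z1_def by auto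
  have b0: "boundary z0 \<tau> = 0" if "\<tau> \<notin> K0" for \<tau>
  proof (rule ccontr)
    assume "boundary z0 \<tau> \<noteq> 0"
    then obtain \<sigma> where "z0 \<sigma> \<noteq> 0" "\<tau> \<subseteq> \<sigma>" using bd_sub by blast
    then show False using dc0 that unfolding z0_def by (auto split: if_splits)
  qed
  have b1: "boundary z1 \<tau> = 0" if "\<tau> \<notin> K0" for \<tau>
  proof -
    have "boundary z \<tau> = boundary z0 \<tau> + boundary z1 \<tau>"
      using ez boundary_add[OF fchain_finite[OF fz0] fchain_finite[OF fz1]] by metis
    then show ?thesis using bz b0[OF that] by simp
  qed
  define w where "w = cone y z1"
  have fw: "fchain w" unfolding w_def by (rule fchain_cone[OF fz1])
  define z' where "z' = (\<lambda>\<rho>. z \<rho> - boundary w \<rho>)"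
  have fz': "fchain z'" unfolding z'_def by (rule fchain_diff[OF fz fchain_bd[OF fw]])
  have ez': "z' \<rho> = z0 \<rho> + cone y (boundary z1) \<rho>" for \<rho>
  proof -
    have "z \<rho> = z0 \<rho> + z1 \<rho>" by (simp add: z0_def z1_def)
    then show ?thesis using cone_id[OF fz1, of y \<rho>] unfolding z'_def w_def by linarith
  qed
  have z'K0: "z' \<in> carrier (chain_group K0 k)"
    unfolding chains_iff
  proof (rule conjI[rotated])
    show "finite {\<sigma>. z' \<sigma> \<noteq> 0}" using fz' by (rule fchain_finite)
    show "\<forall>\<rho>. z' \<rho> \<noteq> 0 \<longrightarrow> \<rho> \<in> K0 \<and> card \<rho> = k"
  proof (intro allI impI)
    fix \<rho> assume nz: "z' \<rho> \<noteq> 0"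
    show "\<rho> \<in> K0 \<and> card \<rho> = k"
    proof (cases "z0 \<rho> \<noteq> 0")
      case True
      then have "\<rho> \<in> K0" "z \<rho> \<noteq> 0" unfolding z0_def by (simp_all split: if_splits)
      then show ?thesis using zK by blast
    next
      case False
      then have "cone y (boundary z1) \<rho> \<noteq> 0" using nz ez' by simp
      then have h: "y \<in> \<rho>" "boundary z1 (\<rho> - {y}) \<noteq> 0" using cone_nz by auto
      then have r0: "\<rho> - {y} \<in> K0" using b1 by blast
      obtain \<sigma> where s: "z1 \<sigma> \<noteq> 0" "\<rho> - {y} \<subseteq> \<sigma>" "finite \<sigma>" "card \<sigma> = Suc (card (\<rho> - {y}))"
        using bd_sub[OF h(2)] by blast
      have "\<sigma> \<notin> K0" "z \<sigma> \<noteq> 0" using s(1) unfolding z1_def by (simp_all split: if_splits)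
      then have sK: "\<sigma> \<in> K" "\<sigma> \<notin> K0" "card \<sigma> = k" using zK by blast+
      have m: "insert y (\<rho> - {y}) \<in> K0" by (rule ii[OF r0 sK(1) sK(2) s(2)])
      have e: "insert y (\<rho> - {y}) = \<rho>" using h by auto
      have "finite (\<rho> - {y})" using s(2,3) by (rule finite_subset)
      then have fr: "finite \<rho>" using finite.insertI[of "\<rho> - {y}" y] e by simp
      have "card \<rho> = Suc (card (\<rho> - {y}))" using card_Suc_Diff1[OF fr h(1)] by simp
      then show ?thesis using m e s(4) sK(3) by simp
    qed
  qed
  qed
  have bz': "boundary z' = (\<lambda>\<tau>. 0)"
  proof
    fix \<tau>
    have "boundary z' \<tau> = boundary z \<tau> - boundary (boundary w) \<tau>"
      unfolding z'_def by (rule boundary_diff[OF fchain_finite[OF fz] fchain_finite[OF fchain_bd[OF fw]]])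
    then show "boundary z' \<tau> = 0" using bz dd[OF fw] by simp
  qed
  obtain a where a: "a \<in> carrier (chain_group K0 (Suc k))" "boundary a = z'"
    using ac0 z'K0 bz' unfolding acyc_def by blast
  have fa: "fchain a" using fchain_of[OF a(1)] finK K0K by blast
  show "\<exists>a \<in> carrier (chain_group K (Suc k)). boundary a = z"
  proof (intro bexI)
    show "boundary (\<lambda>\<sigma>. a \<sigma> + w \<sigma>) = z"
    proof
      fix \<tau>
      have "boundary (\<lambda>\<sigma>. a \<sigma> + w \<sigma>) \<tau> = boundary a \<tau> + boundary w \<tau>"
        by (rule boundary_add[OF fchain_finite[OF fa] fchain_finite[OF fw]])
      then show "boundary (\<lambda>\<sigma>. a \<sigma> + w \<sigma>) \<tau> = z \<tau>" using a(2) unfolding z'_def by simp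
    qed
    show "(\<lambda>\<sigma>. a \<sigma> + w \<sigma>) \<in> carrier (chain_group K (Suc k))"
      unfolding chains_iff
    proof (rule conjI[rotated])
      show "finite {\<sigma>. a \<sigma> + w \<sigma> \<noteq> 0}" using fchain_add[OF fa fw] by (rule fchain_finite)
      show "\<forall>\<rho>. a \<rho> + w \<rho> \<noteq> 0 \<longrightarrow> \<rho> \<in> K \<and> card \<rho> = Suc k"
    proof (intro allI impI)
      fix \<rho> assume nz: "a \<rho> + w \<rho> \<noteq> 0"
      show "\<rho> \<in> K \<and> card \<rho> = Suc k"
      proof (cases "a \<rho> \<noteq> 0")
        case True then show ?thesis using a(1) K0K unfolding chains_iff by blast
      next
        case False
        then have "w \<rho> \<noteq> 0" using nz by simp
        then have h: "y \<in> \<rho>" "z1 (\<rho> - {y}) \<noteq> 0" using cone_nz unfolding w_def by auto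
        have "\<rho> - {y} \<notin> K0" "z (\<rho> - {y}) \<noteq> 0" using h(2) unfolding z1_def by (simp_all split: if_splits)
        then have sK: "\<rho> - {y} \<in> K" "\<rho> - {y} \<notin> K0" "card (\<rho> - {y}) = k" using zK by blast+
        have m: "insert y (\<rho> - {y}) \<in> K" by (rule i[OF sK(1) sK(2)])
        have e: "insert y (\<rho> - {y}) = \<rho>" using h by auto
        have "finite (\<rho> - {y})" using sK finK by blast
        then have fr: "finite \<rho>" using finite.insertI[of "\<rho> - {y}" y] e by simp
        have "card \<rho> = Suc (card (\<rho> - {y}))" using card_Suc_Diff1[OF fr h(1)] by simp
        then show ?thesis using m e sK(3) by simp
      qed
    qed
    qed
  qed
qed




definition KC :: "nat set set \<Rightarrow> (nat set \<Rightarrow> nat set) \<Rightarrow> nat set \<Rightarrow> nat set set" where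
  "KC \<Gamma> A Y = {\<rho>. \<rho> - Y \<in> \<Gamma> \<and> \<rho> \<inter> Y \<subseteq> A (\<rho> - Y)}"

lemma acyc_KC:
  assumes "finite \<Gamma>"
  shows "(\<forall>\<sigma>\<in>\<Gamma>. \<forall>\<tau>. \<tau> \<subseteq> \<sigma> \<longrightarrow> \<tau> \<in> \<Gamma>) \<longrightarrow> (\<forall>\<sigma>\<in>\<Gamma>. finite \<sigma>) \<longrightarrow>
         (\<forall>\<sigma>\<in>\<Gamma>. A \<sigma> \<subseteq> Y \<and> A \<sigma> \<noteq> {} \<and> finite (A \<sigma>)) \<longrightarrow>
         (\<forall>\<sigma>\<in>\<Gamma>. \<forall>\<tau>. \<tau> \<subseteq> \<sigma> \<longrightarrow> A \<sigma> \<subseteq> A \<tau>) \<longrightarrow> acyc (KC \<Gamma> A Y) k"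
  using assms
proof (induct \<Gamma> rule: finite_remove_induct)
  case empty
  have "KC {} A Y = {}" unfolding KC_def by simp
  then show ?case using acyc_empty by simp
next
  case (remove G)
  show ?case
  proof (intro impI)
    assume dc: "\<forall>\<sigma>\<in>G. \<forall>\<tau>. \<tau> \<subseteq> \<sigma> \<longrightarrow> \<tau> \<in> G" and fin: "\<forall>\<sigma>\<in>G. finite \<sigma>"
      and Ap: "\<forall>\<sigma>\<in>G. A \<sigma> \<subseteq> Y \<and> A \<sigma> \<noteq> {} \<and> finite (A \<sigma>)"
      and anti: "\<forall>\<sigma>\<in>G. \<forall>\<tau>. \<tau> \<subseteq> \<sigma> \<longrightarrow> A \<sigma> \<subseteq> A \<tau>"
    obtain s0 where s0': "s0 \<in> G" "\<forall>b\<in>G. s0 \<le> b \<longrightarrow> s0 = b"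
      using finite_has_maximal[OF remove(1) remove(2)] by (elim bexE) simp
    have s0: "s0 \<in> G" "\<And>b. b \<in> G \<Longrightarrow> s0 \<subseteq> b \<Longrightarrow> s0 = b" using s0' by blast+
    define G0 where "G0 = G - {s0}"
    have dc0: "\<forall>\<sigma>\<in>G0. \<forall>\<tau>. \<tau> \<subseteq> \<sigma> \<longrightarrow> \<tau> \<in> G0"
    proof (intro ballI allI impI)
      fix \<sigma> \<tau> assume a: "\<sigma> \<in> G0" "\<tau> \<subseteq> \<sigma>"
      then have "\<sigma> \<in> G" "\<sigma> \<noteq> s0" unfolding G0_def by auto
      then have "\<tau> \<in> G" using dc a(2) by blast
      moreover have "\<tau> \<noteq> s0" using s0(2)[OF \<open>\<sigma> \<in> G\<close>] a(2) \<open>\<sigma> \<noteq> s0\<close> by blast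
      ultimately show "\<tau> \<in> G0" unfolding G0_def by blast
    qed
    have h1: "\<forall>\<sigma>\<in>G0. finite \<sigma>" using fin unfolding G0_def by blast
    have h2: "\<forall>\<sigma>\<in>G0. A \<sigma> \<subseteq> Y \<and> A \<sigma> \<noteq> {} \<and> finite (A \<sigma>)" using Ap unfolding G0_def by blast
    have h3: "\<forall>\<sigma>\<in>G0. \<forall>\<tau>. \<tau> \<subseteq> \<sigma> \<longrightarrow> A \<sigma> \<subseteq> A \<tau>" using anti unfolding G0_def by blast
    note IH0 = remove(4)[OF s0(1), folded G0_def]
    have IH: "acyc (KC G0 A Y) k"
      using IH0 dc0 h1 h2 h3 by blast
    obtain y where y: "y \<in> A s0" using Ap s0(1) by blast
    have yY: "y \<in> Y" using y Ap s0(1) by blast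
    show "acyc (KC G A Y) k"
    proof (rule collapse[OF _ _ _ _ _ IH])
      show "KC G0 A Y \<subseteq> KC G A Y" unfolding KC_def G0_def by blast
      show "\<forall>\<sigma>\<in>KC G A Y. finite \<sigma>"
      proof
        fix \<rho> assume r: "\<rho> \<in> KC G A Y"
        then have "finite (\<rho> - Y)" "finite (\<rho> \<inter> Y)" using fin Ap unfolding KC_def by (blast intro: finite_subset)+
        then have "finite ((\<rho> - Y) \<union> (\<rho> \<inter> Y))" by simp
        moreover have "(\<rho> - Y) \<union> (\<rho> \<inter> Y) = \<rho>" by blast
        ultimately show "finite \<rho>" by simp
      qed
      show "\<rho>' \<in> KC G0 A Y" if "\<rho> \<in> KC G0 A Y" "\<rho>' \<subseteq> \<rho>" for \<rho> \<rho>'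
      proof -
        have a: "\<rho> - Y \<in> G0" "\<rho> \<inter> Y \<subseteq> A (\<rho> - Y)" using that(1) unfolding KC_def by auto
        have b: "\<rho>' - Y \<subseteq> \<rho> - Y" "\<rho>' \<inter> Y \<subseteq> \<rho> \<inter> Y" using that(2) by auto
        have c: "\<rho>' - Y \<in> G0" using dc0 a(1) b(1) by blast
        have "A (\<rho> - Y) \<subseteq> A (\<rho>' - Y)" using anti a(1) b(1) unfolding G0_def by blast
        then show ?thesis using a b c unfolding KC_def by blast
      qed
      show "insert y \<rho> \<in> KC G A Y" if "\<rho> \<in> KC G A Y" "\<rho> \<notin> KC G0 A Y" for \<rho>
      proof -
        have a: "\<rho> - Y \<in> G" "\<rho> \<inter> Y \<subseteq> A (\<rho> - Y)" using that(1) unfolding KC_def by auto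
        have "\<rho> - Y = s0" using a that(2) unfolding KC_def G0_def by blast
        moreover have "insert y \<rho> - Y = \<rho> - Y" "insert y \<rho> \<inter> Y = insert y (\<rho> \<inter> Y)" using yY by auto
        ultimately show ?thesis using a y unfolding KC_def by auto
      qed
      show "insert y \<rho> \<in> KC G0 A Y" if "\<rho> \<in> KC G0 A Y" "s \<in> KC G A Y" "s \<notin> KC G0 A Y" "\<rho> \<subseteq> s" for \<rho> s
      proof -
        have a: "\<rho> - Y \<in> G0" "\<rho> \<inter> Y \<subseteq> A (\<rho> - Y)" using that(1) unfolding KC_def by auto
        have b: "s - Y \<in> G" "s \<inter> Y \<subseteq> A (s - Y)" using that(2) unfolding KC_def by auto
        have s0e: "s - Y = s0" using b that(3) unfolding KC_def G0_def by blast
        have "\<rho> - Y \<subseteq> s0" using s0e that(4) by blast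
        then have "A s0 \<subseteq> A (\<rho> - Y)" using anti s0(1) by blast
        moreover have "\<rho> \<inter> Y \<subseteq> A s0" using b s0e that(4) by blast
        moreover have "insert y \<rho> - Y = \<rho> - Y" "insert y \<rho> \<inter> Y = insert y (\<rho> \<inter> Y)" using yY by auto
        ultimately show ?thesis using a y unfolding KC_def by auto
      qed
    qed
  qed
qed

lemma acyc_Pow:
  assumes "finite V" "1 \<le> k"
  shows "acyc (Pow V) k"
proof (cases "V = {}")
  case True
  have "\<And>z. z \<in> carrier (chain_group (Pow V) k) \<Longrightarrow> z = (\<lambda>\<sigma>. 0)" using True assms(2) unfolding chains_iff by fastforce
  moreover have "(\<lambda>\<sigma>. 0) \<in> carrier (chain_group (Pow V) (Suc k))" unfolding chains_iff by simp
  ultimately show ?thesis unfolding acyc_def using boundary_zero by metis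
next
  case False
  then obtain x where x: "x \<in> V" by blast
  show ?thesis
  proof (rule collapse[OF _ _ _ _ _ acyc_empty])
    show "\<forall>\<sigma>\<in>Pow V. finite \<sigma>" using assms(1) by (auto intro: finite_subset)
    show "insert x \<rho> \<in> Pow V" if "\<rho> \<in> Pow V" for \<rho> using that x by auto
  qed auto
qed




lemma chains_add: "a \<in> carrier (chain_group K d) \<Longrightarrow> b \<in> carrier (chain_group K d) \<Longrightarrow> (\<lambda>\<sigma>. a \<sigma> + b \<sigma>) \<in> carrier (chain_group K d)"
proof -
  assume a: "a \<in> carrier (chain_group K d)" and b: "b \<in> carrier (chain_group K d)"
  have "{\<sigma>. a \<sigma> + b \<sigma> \<noteq> 0} \<subseteq> {\<sigma>. a \<sigma> \<noteq> 0} \<union> {\<sigma>. b \<sigma> \<noteq> 0}" by auto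
  moreover have "finite ({\<sigma>. a \<sigma> \<noteq> 0} \<union> {\<sigma>. b \<sigma> \<noteq> 0})" using a b unfolding chains_iff by simp
  ultimately have "finite {\<sigma>. a \<sigma> + b \<sigma> \<noteq> 0}" by (rule finite_subset)
  moreover have "\<forall>\<sigma>. a \<sigma> + b \<sigma> \<noteq> 0 \<longrightarrow> \<sigma> \<in> K \<and> card \<sigma> = d"
  proof (intro allI impI)
    fix \<sigma> assume "a \<sigma> + b \<sigma> \<noteq> 0"
    then have "a \<sigma> \<noteq> 0 \<or> b \<sigma> \<noteq> 0" by linarith
    then show "\<sigma> \<in> K \<and> card \<sigma> = d" using a b unfolding chains_iff by blast
  qed
  ultimately show ?thesis unfolding chains_iff by blast
qed

lemma chains_neg: "a \<in> carrier (chain_group K d) \<Longrightarrow> (\<lambda>\<sigma>. - a \<sigma>) \<in> carrier (chain_group K d)"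
  unfolding chains_iff by simp

lemma chains_diff: "a \<in> carrier (chain_group K d) \<Longrightarrow> b \<in> carrier (chain_group K d) \<Longrightarrow> (\<lambda>\<sigma>. a \<sigma> - b \<sigma>) \<in> carrier (chain_group K d)"
  using chains_add[of a K d "\<lambda>\<sigma>. - b \<sigma>"] chains_neg[of b K d] by simp

lemma chains_zero: "(\<lambda>\<sigma>. 0) \<in> carrier (chain_group K d)"
  unfolding chains_iff by simp

lemma chains_mono: "a \<in> carrier (chain_group K d) \<Longrightarrow> K \<subseteq> K' \<Longrightarrow> a \<in> carrier (chain_group K' d)"
  unfolding chains_iff by blast

lemma chains_int: "a \<in> carrier (chain_group K d) \<Longrightarrow> a \<in> carrier (chain_group K' d) \<Longrightarrow> a \<in> carrier (chain_group (K \<inter> K') d)"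
  unfolding chains_iff by blast

lemma chains_restr: "a \<in> carrier (chain_group K d) \<Longrightarrow> (\<lambda>\<sigma>. if P \<sigma> then a \<sigma> else 0) \<in> carrier (chain_group {\<sigma>\<in>K. P \<sigma>} d)"
proof -
  assume a: "a \<in> carrier (chain_group K d)"
  have "{\<sigma>. (if P \<sigma> then a \<sigma> else 0) \<noteq> 0} \<subseteq> {\<sigma>. a \<sigma> \<noteq> 0}" by auto
  then have "finite {\<sigma>. (if P \<sigma> then a \<sigma> else 0) \<noteq> 0}" using a unfolding chains_iff by (blast intro: finite_subset)
  then show ?thesis using a unfolding chains_iff by (simp split: if_splits)
qed

lemma chains_fchain_Suc: "a \<in> carrier (chain_group K (Suc d)) \<Longrightarrow> fchain a"
  unfolding chains_iff fchain_def by (metis card.infinite nat.distinct(1))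

lemma bd_chain:
  assumes dc: "\<And>\<sigma> \<tau>. \<sigma> \<in> K \<Longrightarrow> \<tau> \<subseteq> \<sigma> \<Longrightarrow> \<tau> \<in> K" and a: "a \<in> carrier (chain_group K (Suc d))"
  shows "boundary a \<in> carrier (chain_group K d)"
  unfolding chains_iff
proof (rule conjI[rotated])
  show "finite {\<sigma>. boundary a \<sigma> \<noteq> 0}" using fchain_bd[OF chains_fchain_Suc[OF a]] by (rule fchain_finite)
  show "\<forall>\<sigma>. boundary a \<sigma> \<noteq> 0 \<longrightarrow> \<sigma> \<in> K \<and> card \<sigma> = d"
  proof (intro allI impI)
    fix \<tau> assume "boundary a \<tau> \<noteq> 0"
    then obtain \<sigma> where s: "a \<sigma> \<noteq> 0" "\<tau> \<subseteq> \<sigma>" "finite \<sigma>" "card \<sigma> = Suc (card \<tau>)" using bd_sub by blast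
    have "\<sigma> \<in> K" "card \<sigma> = Suc d" using s(1) a unfolding chains_iff by blast+
    have "\<tau> \<in> K" using dc[OF \<open>\<sigma> \<in> K\<close> s(2)] .
    moreover have "card \<tau> = d" using s(4) \<open>card \<sigma> = Suc d\<close> by simp
    ultimately show "\<tau> \<in> K \<and> card \<tau> = d" by blast
  qed
qed

lemma addgrp_chains: "addgrp (carrier (chain_group K d))"
  unfolding addgrp_def using chains_zero chains_add chains_neg by blast

lemma addgrp_cycles: "addgrp (cycles K d)"
proof -
  have "boundary (\<lambda>\<sigma>. a \<sigma> + b \<sigma>) = (\<lambda>\<tau>. 0)" if "a \<in> cycles K d" "b \<in> cycles K d" for a b
  proof
    fix \<tau>
    have "finite {\<sigma>. a \<sigma> \<noteq> 0}" "finite {\<sigma>. b \<sigma> \<noteq> 0}" using that unfolding cycles_def chains_iff by blast+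
    then have "boundary (\<lambda>\<sigma>. a \<sigma> + b \<sigma>) \<tau> = boundary a \<tau> + boundary b \<tau>" by (rule boundary_add)
    then show "boundary (\<lambda>\<sigma>. a \<sigma> + b \<sigma>) \<tau> = 0" using that unfolding cycles_def by simp
  qed
  moreover have "boundary (\<lambda>\<sigma>. - a \<sigma>) = (\<lambda>\<tau>. 0)" if "a \<in> cycles K d" for a
  proof
    fix \<tau>
    have "boundary a = (\<lambda>\<tau>. 0)" using that unfolding cycles_def by blast
    then show "boundary (\<lambda>\<sigma>. - a \<sigma>) \<tau> = 0" using boundary_neg[of a \<tau>] by simp
  qed
  ultimately show ?thesis unfolding addgrp_def cycles_def mem_Collect_eq
    using chains_zero[of K d] chains_add[of _ K d] chains_neg[of _ K d] boundary_zero by blast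
qed

lemma addgrp_boundaries: "addgrp (boundaries K d)"
proof -
  have "(\<lambda>\<sigma>. 0) \<in> boundaries K d" unfolding boundaries_def using chains_zero boundary_zero by (metis image_eqI)
  moreover have "(\<lambda>\<sigma>. a \<sigma> + b \<sigma>) \<in> boundaries K d" if hab: "a \<in> boundaries K d" "b \<in> boundaries K d" for a b
  proof -
    obtain a' b' where ab: "a' \<in> carrier (chain_group K (Suc d))" "b' \<in> carrier (chain_group K (Suc d))" "a = boundary a'" "b = boundary b'"
      using hab unfolding boundaries_def by blast
    have "boundary (\<lambda>\<sigma>. a' \<sigma> + b' \<sigma>) = (\<lambda>\<sigma>. a \<sigma> + b \<sigma>)"
    proof
      fix \<tau>
      have "finite {\<sigma>. a' \<sigma> \<noteq> 0}" "finite {\<sigma>. b' \<sigma> \<noteq> 0}" using ab unfolding chains_iff by blast+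
      then show "boundary (\<lambda>\<sigma>. a' \<sigma> + b' \<sigma>) \<tau> = a \<tau> + b \<tau>" using ab(3,4) by (simp add: boundary_add)
    qed
    then show ?thesis unfolding boundaries_def using chains_add[OF ab(1,2)] by (metis image_eqI)
  qed
  moreover have "(\<lambda>\<sigma>. - a \<sigma>) \<in> boundaries K d" if ha: "a \<in> boundaries K d" for a
  proof -
    obtain a' where a: "a' \<in> carrier (chain_group K (Suc d))" "a = boundary a'"
      using ha unfolding boundaries_def by blast
    have "boundary (\<lambda>\<sigma>. - a' \<sigma>) = (\<lambda>\<sigma>. - a \<sigma>)" using a(2) boundary_neg by blast
    then show ?thesis unfolding boundaries_def using chains_neg[OF a(1)] by (metis image_eqI)
  qed
  ultimately show ?thesis unfolding addgrp_def by blast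
qed

lemma boundaries_cycles:
  assumes dc: "\<And>\<sigma> \<tau>. \<sigma> \<in> K \<Longrightarrow> \<tau> \<subseteq> \<sigma> \<Longrightarrow> \<tau> \<in> K"
  shows "boundaries K d \<subseteq> cycles K d"
proof
  fix b assume "b \<in> boundaries K d"
  then obtain a where a: "a \<in> carrier (chain_group K (Suc d))" "b = boundary a" unfolding boundaries_def by blast
  have "boundary b = (\<lambda>\<tau>. 0)" using dd[OF chains_fchain_Suc[OF a(1)]] a(2) by blast
  moreover have "boundary a \<in> carrier (chain_group K d)" using bd_chain[of K a d] dc a(1) by blast
  ultimately show "b \<in> cycles K d" unfolding cycles_def using a(2) by blast
qed

lemma rh_eq: "reduced_homology K i = fg (cycles K (Suc i)) Mod boundaries K (Suc i)"
  unfolding reduced_homology_def chain_group_def fg_def by simp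




lemma chains_fin: "a \<in> carrier (chain_group K d) \<Longrightarrow> finite {\<sigma>. a \<sigma> \<noteq> 0}"
  unfolding chains_iff by blast

lemma bd_add_fun: "finite {\<sigma>. a \<sigma> \<noteq> 0} \<Longrightarrow> finite {\<sigma>. b \<sigma> \<noteq> 0} \<Longrightarrow>
  boundary (\<lambda>\<sigma>. a \<sigma> + b \<sigma>) = (\<lambda>\<tau>. boundary a \<tau> + boundary b \<tau>)"
  using boundary_add by blast

lemma bd_diff_fun: "finite {\<sigma>. a \<sigma> \<noteq> 0} \<Longrightarrow> finite {\<sigma>. b \<sigma> \<noteq> 0} \<Longrightarrow>
  boundary (\<lambda>\<sigma>. a \<sigma> - b \<sigma>) = (\<lambda>\<tau>. boundary a \<tau> - boundary b \<tau>)"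
  using boundary_diff by blast

lemma bd_neg_fun: "boundary (\<lambda>\<sigma>. - a \<sigma>) = (\<lambda>\<tau>. - boundary a \<tau>)"
  using boundary_neg by blast

lemma main_abs:
  assumes dcD: "\<And>\<sigma> \<tau>. \<sigma> \<in> Dp \<Longrightarrow> \<tau> \<subseteq> \<sigma> \<Longrightarrow> \<tau> \<in> Dp"
    and dcP: "\<And>\<sigma> \<tau>. \<sigma> \<in> P \<Longrightarrow> \<tau> \<subseteq> \<sigma> \<Longrightarrow> \<tau> \<in> P"
    and GI: "Dp \<inter> P = \<Gamma>"
    and acD1: "acyc Dp k" and acD2: "acyc Dp (Suc k)" and acP1: "acyc P k" and acP2: "acyc P (Suc k)"
  shows "fg (cycles (Dp \<union> P) (Suc k)) Mod boundaries (Dp \<union> P) (Suc k) \<cong> fg (cycles \<Gamma> k) Mod boundaries \<Gamma> k"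
proof -
  define D where "D = Dp \<union> P"
  have GD: "\<Gamma> \<subseteq> Dp" and GP: "\<Gamma> \<subseteq> P" using GI by blast+
  have DpP: "{\<sigma> \<in> Dp. \<sigma> \<in> P} = \<Gamma>" using GI by blast
  have dcDD: "\<And>\<sigma> \<tau>. \<sigma> \<in> D \<Longrightarrow> \<tau> \<subseteq> \<sigma> \<Longrightarrow> \<tau> \<in> D" unfolding D_def using dcD dcP by blast
  have dcG: "\<And>\<sigma> \<tau>. \<sigma> \<in> \<Gamma> \<Longrightarrow> \<tau> \<subseteq> \<sigma> \<Longrightarrow> \<tau> \<in> \<Gamma>" unfolding GI[symmetric] using dcD dcP by blast
  define rY where "rY z = (\<lambda>\<rho>. if \<rho> \<in> P then 0 else z \<rho>)" for z :: "nat set \<Rightarrow> int"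
  define rP where "rP z = (\<lambda>\<rho>. if \<rho> \<in> P then z \<rho> else 0)" for z :: "nat set \<Rightarrow> int"
  define f where "f z = boundary (rY z)" for z
  have rYc: "rY z \<in> carrier (chain_group Dp d)" if "z \<in> carrier (chain_group D d)" for z d
  proof -
    have e: "rY z = (\<lambda>\<sigma>. if \<sigma> \<notin> P then z \<sigma> else 0)" unfolding rY_def by auto
    have "rY z \<in> carrier (chain_group {\<sigma>\<in>D. \<sigma> \<notin> P} d)" unfolding e
      by (rule chains_restr[OF that])
    moreover have "{\<sigma>\<in>D. \<sigma> \<notin> P} \<subseteq> Dp" unfolding D_def by blast
    ultimately show ?thesis by (rule chains_mono)
  qed
  have rPc: "rP z \<in> carrier (chain_group P d)" if "z \<in> carrier (chain_group K d)" for z K d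
  proof -
    have "rP z \<in> carrier (chain_group {\<sigma>\<in>K. \<sigma> \<in> P} d)" unfolding rP_def
      using chains_restr[OF that, of "\<lambda>\<sigma>. \<sigma> \<in> P"] by simp
    moreover have "{\<sigma>\<in>K. \<sigma> \<in> P} \<subseteq> P" by blast
    ultimately show ?thesis by (rule chains_mono)
  qed
  have rPG: "rP z \<in> carrier (chain_group \<Gamma> d)" if "z \<in> carrier (chain_group Dp d)" for z d
  proof -
    have "rP z \<in> carrier (chain_group {\<sigma>\<in>Dp. \<sigma> \<in> P} d)" unfolding rP_def
      using chains_restr[OF that, of "\<lambda>\<sigma>. \<sigma> \<in> P"] by simp
    then show ?thesis unfolding DpP .
  qed
  have esplit: "z = (\<lambda>\<sigma>. rY z \<sigma> + rP z \<sigma>)" for z unfolding rY_def rP_def by auto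
  have bsplit: "boundary z = (\<lambda>\<tau>. boundary (rY z) \<tau> + boundary (rP z) \<tau>)" if "z \<in> carrier (chain_group D d)" for z d
  proof -
    have "boundary z = boundary (\<lambda>\<sigma>. rY z \<sigma> + rP z \<sigma>)" using esplit[of z] by simp
    also have "\<dots> = (\<lambda>\<tau>. boundary (rY z) \<tau> + boundary (rP z) \<tau>)"
      by (rule bd_add_fun[OF chains_fin[OF rYc[OF that]] chains_fin[OF rPc[OF that]]])
    finally show ?thesis .
  qed
  have CDp: "a \<in> carrier (chain_group D d)" if "a \<in> carrier (chain_group Dp d)" for a d
    using chains_mono[OF that] unfolding D_def by blast
  have CP: "a \<in> carrier (chain_group D d)" if "a \<in> carrier (chain_group P d)" for a d
    using chains_mono[OF that] unfolding D_def by blast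
  have rYP0: "rY z = (\<lambda>\<sigma>. 0)" if "z \<in> carrier (chain_group P d)" for z d
  proof
    fix \<sigma> show "rY z \<sigma> = 0" using that unfolding rY_def chains_iff by auto
  qed
  have Z1: "addgrp (cycles D (Suc k))" by (rule addgrp_cycles)
  have B1: "addgrp (boundaries D (Suc k))" "boundaries D (Suc k) \<subseteq> cycles D (Suc k)"
    by (rule addgrp_boundaries, rule boundaries_cycles) (blast intro: dcDD)
  have Z2: "addgrp (cycles \<Gamma> k)" by (rule addgrp_cycles)
  have B2: "addgrp (boundaries \<Gamma> k)" "boundaries \<Gamma> k \<subseteq> cycles \<Gamma> k"
    by (rule addgrp_boundaries, rule boundaries_cycles) (blast intro: dcG)
  have "fg (cycles D (Suc k)) Mod boundaries D (Suc k) \<cong> fg (cycles \<Gamma> k) Mod boundaries \<Gamma> k"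
  proof (rule quot_iso[OF Z1 B1 Z2 B2])
    show fZ: "f z \<in> cycles \<Gamma> k" if "z \<in> cycles D (Suc k)" for z
    proof -
      have zc: "z \<in> carrier (chain_group D (Suc k))" and bz: "boundary z = (\<lambda>\<tau>. 0)"
        using that unfolding cycles_def by blast+
      have y1: "boundary (rY z) \<in> carrier (chain_group Dp k)" using bd_chain[of Dp "rY z" k] dcD rYc[OF zc] by blast
      have p1: "boundary (rP z) \<in> carrier (chain_group P k)" using bd_chain[of P "rP z" k] dcP rPc[OF zc] by blast
      have "boundary (rY z) = (\<lambda>\<tau>. - boundary (rP z) \<tau>)"
      proof
        fix \<tau> have "boundary z \<tau> = boundary (rY z) \<tau> + boundary (rP z) \<tau>" using bsplit[OF zc] by metis
        then show "boundary (rY z) \<tau> = - boundary (rP z) \<tau>" using bz by simp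
      qed
      then have "boundary (rY z) \<in> carrier (chain_group P k)" using chains_neg[OF p1] by simp
      then have "boundary (rY z) \<in> carrier (chain_group \<Gamma> k)" using chains_int[OF y1] GI by blast
      moreover have "boundary (boundary (rY z)) = (\<lambda>\<tau>. 0)" using dd[OF chains_fchain_Suc[OF rYc[OF zc]]] by blast
      ultimately show ?thesis unfolding cycles_def f_def by blast
    qed
    show "f (\<lambda>\<sigma>. a \<sigma> + b \<sigma>) = (\<lambda>\<sigma>. f a \<sigma> + f b \<sigma>)" if "a \<in> cycles D (Suc k)" "b \<in> cycles D (Suc k)" for a b
    proof -
      have ac: "a \<in> carrier (chain_group D (Suc k))" "b \<in> carrier (chain_group D (Suc k))" using that unfolding cycles_def by blast+
      have "rY (\<lambda>\<sigma>. a \<sigma> + b \<sigma>) = (\<lambda>\<sigma>. rY a \<sigma> + rY b \<sigma>)" unfolding rY_def by auto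
      then show ?thesis unfolding f_def using bd_add_fun[OF chains_fin[OF rYc[OF ac(1)]] chains_fin[OF rYc[OF ac(2)]]] by simp
    qed
    show "f z \<in> boundaries \<Gamma> k \<longleftrightarrow> z \<in> boundaries D (Suc k)" if zZ: "z \<in> cycles D (Suc k)" for z
    proof
      have zc: "z \<in> carrier (chain_group D (Suc k))" and bz: "boundary z = (\<lambda>\<tau>. 0)"
        using zZ unfolding cycles_def by blast+
      assume "f z \<in> boundaries \<Gamma> k"
      then obtain g where g: "g \<in> carrier (chain_group \<Gamma> (Suc k))" "f z = boundary g" unfolding boundaries_def by blast
      have gD: "g \<in> carrier (chain_group Dp (Suc k))" using chains_mono[OF g(1) GD] .
      have gP: "g \<in> carrier (chain_group P (Suc k))" using chains_mono[OF g(1) GP] .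
      define u1 where "u1 = (\<lambda>\<sigma>. rY z \<sigma> - g \<sigma>)"
      have u1c: "u1 \<in> carrier (chain_group Dp (Suc k))" unfolding u1_def by (rule chains_diff[OF rYc[OF zc] gD])
      have "boundary u1 = (\<lambda>\<tau>. boundary (rY z) \<tau> - boundary g \<tau>)" unfolding u1_def
        by (rule bd_diff_fun[OF chains_fin[OF rYc[OF zc]] chains_fin[OF gD]])
      then have "boundary u1 = (\<lambda>\<tau>. 0)" using g(2) unfolding f_def by simp
      then obtain a where a: "a \<in> carrier (chain_group Dp (Suc (Suc k)))" "boundary a = u1"
        using acD2 u1c unfolding acyc_def by blast
      define u2 where "u2 = (\<lambda>\<sigma>. rP z \<sigma> + g \<sigma>)"
      have u2c: "u2 \<in> carrier (chain_group P (Suc k))" unfolding u2_def by (rule chains_add[OF rPc[OF zc] gP])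
      have "boundary u2 = (\<lambda>\<tau>. boundary (rP z) \<tau> + boundary g \<tau>)" unfolding u2_def
        by (rule bd_add_fun[OF chains_fin[OF rPc[OF zc]] chains_fin[OF gP]])
      also have "\<dots> = boundary z" using bsplit[OF zc] g(2) unfolding f_def by (simp add: add.commute)
      finally have "boundary u2 = (\<lambda>\<tau>. 0)" using bz by simp
      then obtain b where b: "b \<in> carrier (chain_group P (Suc (Suc k)))" "boundary b = u2"
        using acP2 u2c unfolding acyc_def by blast
      have abc: "(\<lambda>\<sigma>. a \<sigma> + b \<sigma>) \<in> carrier (chain_group D (Suc (Suc k)))" by (rule chains_add[OF CDp[OF a(1)] CP[OF b(1)]])
      have "boundary (\<lambda>\<sigma>. a \<sigma> + b \<sigma>) = (\<lambda>\<tau>. u1 \<tau> + u2 \<tau>)"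
        using bd_add_fun[OF chains_fin[OF a(1)] chains_fin[OF b(1)]] a(2) b(2) by simp
      also have "\<dots> = z" unfolding u1_def u2_def using esplit[of z] by simp
      finally show "z \<in> boundaries D (Suc k)" unfolding boundaries_def using abc by (metis image_eqI)
    next
      assume "z \<in> boundaries D (Suc k)"
      then obtain w where w: "w \<in> carrier (chain_group D (Suc (Suc k)))" "z = boundary w" unfolding boundaries_def by blast
      define h where "h = boundary (rY w)"
      have hc: "h \<in> carrier (chain_group Dp (Suc k))" unfolding h_def using bd_chain[of Dp "rY w" "Suc k"] dcD rYc[OF w(1)] by blast
      have pc: "boundary (rP w) \<in> carrier (chain_group P (Suc k))" using bd_chain[of P "rP w" "Suc k"] dcP rPc[OF w(1)] by blast
      have ez: "z = (\<lambda>\<tau>. h \<tau> + boundary (rP w) \<tau>)" using bsplit[OF w(1)] w(2) unfolding h_def by simp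
      have "rY z = (\<lambda>\<sigma>. h \<sigma> - rP h \<sigma>)"
      proof
        fix \<sigma>
        show "rY z \<sigma> = h \<sigma> - rP h \<sigma>"
        proof (cases "\<sigma> \<in> P")
          case True then show ?thesis unfolding rY_def rP_def by simp
        next
          case False
          then have "boundary (rP w) \<sigma> = 0" using pc unfolding chains_iff by blast
          then show ?thesis using False ez unfolding rY_def rP_def by simp
        qed
      qed
      then have "f z = (\<lambda>\<tau>. boundary h \<tau> - boundary (rP h) \<tau>)" unfolding f_def
        using bd_diff_fun[OF chains_fin[OF hc] chains_fin[OF rPc[OF hc]]] by simp
      also have "boundary h = (\<lambda>\<tau>. 0)" unfolding h_def using dd[OF chains_fchain_Suc[OF rYc[OF w(1)]]] by blast
      finally have "f z = boundary (\<lambda>\<sigma>. - rP h \<sigma>)" using bd_neg_fun[of "rP h"] by simp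
      moreover have "(\<lambda>\<sigma>. - rP h \<sigma>) \<in> carrier (chain_group \<Gamma> (Suc k))" by (rule chains_neg[OF rPG[OF hc]])
      ultimately show "f z \<in> boundaries \<Gamma> k" unfolding boundaries_def by (metis image_eqI)
    qed
    show "\<exists>z\<in>cycles D (Suc k). \<exists>bb\<in>boundaries \<Gamma> k. f z = (\<lambda>\<sigma>. bb \<sigma> + c \<sigma>)" if cZ: "c \<in> cycles \<Gamma> k" for c
    proof -
      have cc: "c \<in> carrier (chain_group \<Gamma> k)" and bc: "boundary c = (\<lambda>\<tau>. 0)" using cZ unfolding cycles_def by blast+
      obtain a where a: "a \<in> carrier (chain_group Dp (Suc k))" "boundary a = c"
        using acD1 chains_mono[OF cc GD] bc unfolding acyc_def by blast
      obtain b where b: "b \<in> carrier (chain_group P (Suc k))" "boundary b = c"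
        using acP1 chains_mono[OF cc GP] bc unfolding acyc_def by blast
      define z where "z = (\<lambda>\<sigma>. a \<sigma> - b \<sigma>)"
      have zc: "z \<in> carrier (chain_group D (Suc k))" unfolding z_def by (rule chains_diff[OF CDp[OF a(1)] CP[OF b(1)]])
      have "boundary z = (\<lambda>\<tau>. boundary a \<tau> - boundary b \<tau>)" unfolding z_def
        by (rule bd_diff_fun[OF chains_fin[OF a(1)] chains_fin[OF b(1)]])
      then have "boundary z = (\<lambda>\<tau>. 0)" using a(2) b(2) by simp
      then have zZ: "z \<in> cycles D (Suc k)" using zc unfolding cycles_def by blast
      have "rY z = (\<lambda>\<sigma>. a \<sigma> - rP a \<sigma>)"
      proof
        fix \<sigma>
        show "rY z \<sigma> = a \<sigma> - rP a \<sigma>"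
        proof (cases "\<sigma> \<in> P")
          case True then show ?thesis unfolding rY_def rP_def by simp
        next
          case False
          then have "b \<sigma> = 0" using b(1) unfolding chains_iff by blast
          then show ?thesis using False unfolding rY_def rP_def z_def by simp
        qed
      qed
      then have "f z = (\<lambda>\<tau>. boundary a \<tau> - boundary (rP a) \<tau>)" unfolding f_def
        using bd_diff_fun[OF chains_fin[OF a(1)] chains_fin[OF rPc[OF a(1)]]] by simp
      also have "\<dots> = (\<lambda>\<tau>. boundary (\<lambda>\<sigma>. - rP a \<sigma>) \<tau> + c \<tau>)" using a(2) bd_neg_fun[of "rP a"] by auto
      finally have "f z = (\<lambda>\<tau>. boundary (\<lambda>\<sigma>. - rP a \<sigma>) \<tau> + c \<tau>)" .
      moreover have "boundary (\<lambda>\<sigma>. - rP a \<sigma>) \<in> boundaries \<Gamma> k"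
        unfolding boundaries_def using chains_neg[OF rPG[OF a(1)]] by (metis image_eqI)
      ultimately show ?thesis using zZ by blast
    qed
  qed
  then show ?thesis unfolding D_def .
qed




lemma KC_dc:
  assumes dc: "\<forall>\<sigma>\<in>\<Gamma>. \<forall>\<tau>. \<tau> \<subseteq> \<sigma> \<longrightarrow> \<tau> \<in> \<Gamma>" and anti: "\<forall>\<sigma>\<in>\<Gamma>. \<forall>\<tau>. \<tau> \<subseteq> \<sigma> \<longrightarrow> A \<sigma> \<subseteq> A \<tau>"
    and r: "\<rho> \<in> KC \<Gamma> A Y" "\<rho>' \<subseteq> \<rho>"
  shows "\<rho>' \<in> KC \<Gamma> A Y"
proof -
  have a: "\<rho> - Y \<in> \<Gamma>" "\<rho> \<inter> Y \<subseteq> A (\<rho> - Y)" using r(1) unfolding KC_def by auto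
  have b: "\<rho>' - Y \<subseteq> \<rho> - Y" "\<rho>' \<inter> Y \<subseteq> \<rho> \<inter> Y" using r(2) by auto
  have c: "\<rho>' - Y \<in> \<Gamma>" using dc a(1) b(1) by blast
  have "A (\<rho> - Y) \<subseteq> A (\<rho>' - Y)" using anti a(1) b(1) by blast
  then show ?thesis using a b c unfolding KC_def by blast
qed

theorem theorem4p7:
  fixes V1 :: "nat set" and \<Gamma> :: "nat set set" and m :: nat
    and G :: "nat \<Rightarrow> nat set" and y :: "nat \<Rightarrow> nat"
  assumes "finite V1"
    and "simplicial_complex_on V1 \<Gamma>"
    and "card (facets \<Gamma>) = m"
    and "\<forall>j<m. G j \<subseteq> V1 \<and> V1 - G j \<in> \<Gamma>"
    and "\<forall>F\<in>facets \<Gamma>. \<exists>j<m. F = V1 - G j"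
    and "inj_on y {..<m}"
    and "y ` {..<m} \<inter> V1 = {}"
  shows "\<forall>i::nat.
    reduced_homology
      ({\<sigma> \<union> \<tau> | \<sigma> \<tau>. \<sigma> \<in> \<Gamma> \<and> \<tau> \<subseteq> y ` {j. j < m \<and> \<sigma> \<subseteq> V1 - G j}} \<union> Pow V1) (Suc i)
    \<cong> reduced_homology \<Gamma> i"
proof
  fix i
  note finV = assms(1)
  have GP: "\<Gamma> \<subseteq> Pow V1" and dcG: "\<forall>\<sigma>\<in>\<Gamma>. \<forall>\<tau>. \<tau> \<subseteq> \<sigma> \<longrightarrow> \<tau> \<in> \<Gamma>"
    using assms(2) unfolding simplicial_complex_on_def by blast+
  define Y where "Y = y ` {..<m}"
  define A where "A \<sigma> = y ` {j. j < m \<and> \<sigma> \<subseteq> V1 - G j}" for \<sigma>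
  have YV: "Y \<inter> V1 = {}" unfolding Y_def using assms(7) .
  have AY: "A \<sigma> \<subseteq> Y" for \<sigma> unfolding A_def Y_def by auto
  have finA: "finite (A \<sigma>)" for \<sigma> unfolding A_def by simp
  have anti: "\<forall>\<sigma>\<in>\<Gamma>. \<forall>\<tau>. \<tau> \<subseteq> \<sigma> \<longrightarrow> A \<sigma> \<subseteq> A \<tau>" unfolding A_def by blast
  have finG: "finite \<Gamma>" using GP finV by (meson finite_Pow_iff finite_subset)
  have finm: "\<forall>\<sigma>\<in>\<Gamma>. finite \<sigma>" using GP finV by (meson PowD finite_subset subsetD)
  have Ane: "A \<sigma> \<noteq> {}" if s: "\<sigma> \<in> \<Gamma>" for \<sigma>
  proof -
    define S where "S = {F \<in> \<Gamma>. \<sigma> \<subseteq> F}"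
    have "finite S" unfolding S_def using finG by simp
    moreover have "S \<noteq> {}" unfolding S_def using s by blast
    ultimately have "\<exists>F\<in>S. \<forall>b\<in>S. F \<le> b \<longrightarrow> F = b" by (rule finite_has_maximal)
    then obtain F where F: "F \<in> S" "\<forall>b\<in>S. F \<le> b \<longrightarrow> F = b" by (elim bexE) blast
    have "F \<in> facets \<Gamma>"
      unfolding facets_def
    proof (intro CollectI conjI ballI impI)
      show "F \<in> \<Gamma>" using F(1) unfolding S_def by blast
      fix H assume "H \<in> \<Gamma>" "F \<subseteq> H"
      then have "H \<in> S" using F(1) unfolding S_def by blast
      then show "H = F" using F(2) \<open>F \<subseteq> H\<close> by blast
    qed
    then obtain j where j: "j < m" "F = V1 - G j" using assms(5) by blast
    have "\<sigma> \<subseteq> F" using F(1) unfolding S_def by blast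
    then have "y j \<in> A \<sigma>" unfolding A_def using j by blast
    then show ?thesis by blast
  qed
  have eqD: "{\<sigma> \<union> \<tau> | \<sigma> \<tau>. \<sigma> \<in> \<Gamma> \<and> \<tau> \<subseteq> y ` {j. j < m \<and> \<sigma> \<subseteq> V1 - G j}} = KC \<Gamma> A Y"
  proof (intro equalityI subsetI)
    fix \<rho> assume "\<rho> \<in> {\<sigma> \<union> \<tau> | \<sigma> \<tau>. \<sigma> \<in> \<Gamma> \<and> \<tau> \<subseteq> y ` {j. j < m \<and> \<sigma> \<subseteq> V1 - G j}}"
    then obtain \<sigma> \<tau> where st: "\<rho> = \<sigma> \<union> \<tau>" "\<sigma> \<in> \<Gamma>" "\<tau> \<subseteq> A \<sigma>" unfolding A_def by blast
    have "\<sigma> \<inter> Y = {}" using st(2) GP YV by blast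
    moreover have "\<tau> \<subseteq> Y" using st(3) AY by blast
    ultimately have "\<rho> - Y = \<sigma>" "\<rho> \<inter> Y = \<tau>" using st(1) by blast+
    then show "\<rho> \<in> KC \<Gamma> A Y" unfolding KC_def using st by simp
  next
    fix \<rho> assume "\<rho> \<in> KC \<Gamma> A Y"
    then have r: "\<rho> - Y \<in> \<Gamma>" "\<rho> \<inter> Y \<subseteq> A (\<rho> - Y)" unfolding KC_def by blast+
    have "\<rho> = (\<rho> - Y) \<union> (\<rho> \<inter> Y)" by blast
    then show "\<rho> \<in> {\<sigma> \<union> \<tau> | \<sigma> \<tau>. \<sigma> \<in> \<Gamma> \<and> \<tau> \<subseteq> y ` {j. j < m \<and> \<sigma> \<subseteq> V1 - G j}}"
      using r unfolding A_def by blast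
  qed
  have GI: "KC \<Gamma> A Y \<inter> Pow V1 = \<Gamma>"
  proof (intro equalityI subsetI)
    fix \<rho> assume "\<rho> \<in> KC \<Gamma> A Y \<inter> Pow V1"
    then have "\<rho> - Y \<in> \<Gamma>" "\<rho> \<subseteq> V1" unfolding KC_def by blast+
    moreover have "\<rho> - Y = \<rho>" using \<open>\<rho> \<subseteq> V1\<close> YV by blast
    ultimately show "\<rho> \<in> \<Gamma>" by simp
  next
    fix \<rho> assume r: "\<rho> \<in> \<Gamma>"
    then have "\<rho> \<subseteq> V1" using GP by blast
    then have "\<rho> - Y = \<rho>" "\<rho> \<inter> Y = {}" using YV by blast+
    then show "\<rho> \<in> KC \<Gamma> A Y \<inter> Pow V1" unfolding KC_def using r \<open>\<rho> \<subseteq> V1\<close> by simp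
  qed
  have Ap: "\<forall>\<sigma>\<in>\<Gamma>. A \<sigma> \<subseteq> Y \<and> A \<sigma> \<noteq> {} \<and> finite (A \<sigma>)" using AY Ane finA by blast
  have acD: "acyc (KC \<Gamma> A Y) k" for k
    using acyc_KC[OF finG, of A Y k] dcG finm Ap anti by blast
  have acP: "acyc (Pow V1) (Suc k)" for k
    using acyc_Pow[OF finV, of "Suc k"] by simp
  have dcD: "\<And>\<sigma> \<tau>. \<sigma> \<in> KC \<Gamma> A Y \<Longrightarrow> \<tau> \<subseteq> \<sigma> \<Longrightarrow> \<tau> \<in> KC \<Gamma> A Y"
    using KC_dc[OF dcG anti] by blast
  have dcP: "\<And>\<sigma> \<tau>. \<sigma> \<in> Pow V1 \<Longrightarrow> \<tau> \<subseteq> \<sigma> \<Longrightarrow> \<tau> \<in> Pow V1" by blast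
  have "fg (cycles (KC \<Gamma> A Y \<union> Pow V1) (Suc (Suc i))) Mod boundaries (KC \<Gamma> A Y \<union> Pow V1) (Suc (Suc i))
       \<cong> fg (cycles \<Gamma> (Suc i)) Mod boundaries \<Gamma> (Suc i)"
    by (rule main_abs[OF dcD dcP GI acD acD acP acP])
  then show "reduced_homology
      ({\<sigma> \<union> \<tau> | \<sigma> \<tau>. \<sigma> \<in> \<Gamma> \<and> \<tau> \<subseteq> y ` {j. j < m \<and> \<sigma> \<subseteq> V1 - G j}} \<union> Pow V1) (Suc i)
    \<cong> reduced_homology \<Gamma> i" unfolding eqD rh_eq .
qed


end
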